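(* Fix an iteration index $k$ and a current policy $\pi_k$. Assume that for $\rho_{\mathcal Q}$-almost every $q$ we have $0<\mu_{\pi_k}(q)<1$ (so that $\tilde\sigma_k(q)>0$). Then for every policy $\pi$, \[ \mathbb{E}_{q\sim\rho_{\mathcal Q}}\bigl[p_{\pi}(q)-p_{\pi_k}(q)\bigr] \;\ge\; \mathbb{E}_{q\sim\rho_{\mathcal Q}}\bigl[\tilde L_{\pi_k}(\pi(\cdot\mid q))\bigr] -2\sqrt{\mathbb{E}_{q\sim\rho_{\mathcal Q}}\Bigl(\tfrac{1-\rho^+(q)-\rho^-(q)-\tilde\sigma_k(q)}{\tilde\sigma_k(q)}\Bigr)^2}\; \sqrt{\mathbb{E}_{q\sim\rho_{\mathcal Q}}\mathrm{TV}^2\bigl(\pi(\cdot\mid q)\,\|\,\pi_k(\cdot\mid q)\bigr)}. \]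
   Context: Setting: $\mathcal Q$ is a set of prompts with a probability distribution $\rho_{\mathcal Q}$; $\mathcal O$ is a countable set of responses; $r^*:\mathcal Q\times\mathcal O\to\{0,1\}$ is the true (binary) reward. A policy $\pi$ assigns to each $q$ a probability distribution $\pi(\cdot\mid q)$ on $\mathcal O$. The success probability is $p_\pi(q)=\mathbb E_{o\sim\pi(\cdot\mid q)}[r^*(q,o)]$. $\mathrm{TV}(P,Q)=\sup_A|P(A)-Q(A)|$ is the total variation distance. Noise model: for each $q$ there are flip rates $\rho^+(q),\rho^-(q)\in[0,1]$; with $\xi\sim U[0,1]$ independent of $(q,o)$, the observed reward is $\tilde r(q,o,\xi)=(1-r^*(q,o))\mathbf 1_{\{\xi\le\rho^+(q)\}}+r^*(q,o)\mathbf 1_{\{\xi\le 1-\rho^-(q)\}}$. Define $\mu_{\pi_k}(q)=\rho^+(q)+(1-\rho^+(q)-\rho^-(q))\,p_{\pi_k}(q)$ and $\tilde\sigma_k(q)=\sqrt{\mu_{\pi_k}(q)(1-\mu_{\pi_k}(q))}$ (the mean and standard deviation of $\tilde r$ under $o\sim\pi_k(\cdot\mid q)$, $\xi\sim U[0,1]$). The noisy surrogate is \[ \tilde L_{\pi_k}(\pi(\cdot\mid q))=\frac{\mathbb E_{\xi,o\sim\pi(\cdot\mid q)}[\tilde r(q,o,\xi)]-\mathbb E_{\xi,o\sim\pi_k(\cdot\mid q)}[\tilde r(q,o,\xi)]}{\tilde\sigma_k(q)}=\frac{(1-\rho^+(q)-\rho^-(q))\,(p_\pi(q)-p_{\pi_k}(q))}{\tilde\sigma_k(q)}.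 \] *)

theory Defs
  imports "HOL-Probability.Probability"
begin

definition succ_prob :: "('q \<Rightarrow> 'o \<Rightarrow> real) \<Rightarrow> ('q \<Rightarrow> 'o pmf) \<Rightarrow> 'q \<Rightarrow> real" where
  "succ_prob rstar pol q = measure_pmf.expectation (pol q) (\<lambda>y. rstar q y)"

definition tv_dist :: "'o pmf \<Rightarrow> 'o pmf \<Rightarrow> real" where
  "tv_dist P Q = (SUP A. \<bar>measure_pmf.prob P A - measure_pmf.prob Q A\<bar>)"

definition noisy_reward ::
  "('q \<Rightarrow> 'o \<Rightarrow> real) \<Rightarrow> ('q \<Rightarrow> real) \<Rightarrow> ('q \<Rightarrow> real) \<Rightarrow> 'q \<Rightarrow> 'o \<Rightarrow> real \<Rightarrow> real" where
  "noisy_reward rstar rp rm q y xi =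
     (1 - rstar q y) * indicator {..rp q} xi + rstar q y * indicator {..1 - rm q} xi"

abbreviation unif01 :: "real measure" where
  "unif01 \<equiv> uniform_measure lborel {0..1}"

definition noisy_mean ::
  "('q \<Rightarrow> 'o \<Rightarrow> real) \<Rightarrow> ('q \<Rightarrow> real) \<Rightarrow> ('q \<Rightarrow> real) \<Rightarrow> ('q \<Rightarrow> 'o pmf) \<Rightarrow> 'q \<Rightarrow> real" where
  "noisy_mean rstar rp rm pol q =
     measure_pmf.expectation (pol q) (\<lambda>y. \<integral>xi. noisy_reward rstar rp rm q y xi \<partial>unif01)"

definition mu_k ::
  "('q \<Rightarrow> 'o \<Rightarrow> real) \<Rightarrow> ('q \<Rightarrow> real) \<Rightarrow> ('q \<Rightarrow> real) \<Rightarrow> ('q \<Rightarrow> 'o pmf) \<Rightarrow> 'q \<Rightarrow> real" where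
  "mu_k rstar rp rm polk q = rp q + (1 - rp q - rm q) * succ_prob rstar polk q"

definition sigma_k ::
  "('q \<Rightarrow> 'o \<Rightarrow> real) \<Rightarrow> ('q \<Rightarrow> real) \<Rightarrow> ('q \<Rightarrow> real) \<Rightarrow> ('q \<Rightarrow> 'o pmf) \<Rightarrow> 'q \<Rightarrow> real" where
  "sigma_k rstar rp rm polk q =
     sqrt (mu_k rstar rp rm polk q * (1 - mu_k rstar rp rm polk q))"

definition noisy_surrogate ::
  "('q \<Rightarrow> 'o \<Rightarrow> real) \<Rightarrow> ('q \<Rightarrow> real) \<Rightarrow> ('q \<Rightarrow> real) \<Rightarrow> ('q \<Rightarrow> 'o pmf) \<Rightarrow> ('q \<Rightarrow> 'o pmf) \<Rightarrow> 'q \<Rightarrow> real" where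
  "noisy_surrogate rstar rp rm polk pol q =
     (noisy_mean rstar rp rm pol q - noisy_mean rstar rp rm polk q) / sigma_k rstar rp rm polk q"

end

theory Submission
  imports Defs
begin

lemma succ_prob_eq:
  assumes "\<And>q y. rstar q y \<in> {0, 1}"
  shows "succ_prob rstar pol q = measure_pmf.prob (pol q) {y. rstar q y = 1}"
proof -
  have "succ_prob rstar pol q = measure_pmf.expectation (pol q) (indicator {y. rstar q y = 1})"
    unfolding succ_prob_def
  proof (rule Bochner_Integration.integral_cong[OF refl])
    fix y
    have "rstar q y = 0 \<or> rstar q y = 1" using assms[of q y] by simp
    then show "rstar q y = indicator {y. rstar q y = 1} y" by (auto simp: indicator_def)
  qed
  also have "\<dots> = measure_pmf.prob (pol q) {y. rstar q y = 1}" by simp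
  finally show ?thesis .
qed

lemma unif_ind:
  assumes "0 \<le> (a::real)" "a \<le> 1"
  shows "(\<integral>xi. indicator {..a} xi \<partial>unif01) = a"
proof -
  have "(\<integral>xi. indicator {..a} xi \<partial>unif01) = measure unif01 {..a}"
    by simp
  also have "\<dots> = measure lborel ({0..1} \<inter> {..a}) / measure lborel {0..(1::real)}"
    by (subst measure_uniform_measure) auto
  also have "{0..1} \<inter> {..a} = {0..a}" using assms by auto
  finally show ?thesis using assms by simp
qed

lemma noisy_mean_eq:
  assumes "\<And>q y. rstar q y \<in> {0, 1}"
    and "\<And>q. rp q \<in> {0..1}" and "\<And>q. rm q \<in> {0..1}"
  shows "noisy_mean rstar rp rm pol q = rp q + (1 - rp q - rm q) * succ_prob rstar pol q"
proof -
  have i: "(\<integral>xi. noisy_reward rstar rp rm q y xi \<partial>unif01) = rp q + (1 - rp q - rm q) * rstar q y" for y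
  proof -
    have "rstar q y = 0 \<or> rstar q y = 1" using assms(1)[of q y] by auto
    then show ?thesis
    proof
      assume h: "rstar q y = 0"
      have "noisy_reward rstar rp rm q y = indicator {..rp q}" unfolding noisy_reward_def h by (simp add: fun_eq_iff)
      then show ?thesis using unif_ind[of "rp q"] assms(2)[of q] h by simp
    next
      assume h: "rstar q y = 1"
      have "noisy_reward rstar rp rm q y = indicator {..1 - rm q}" unfolding noisy_reward_def h by (simp add: fun_eq_iff)
      then show ?thesis using unif_ind[of "1 - rm q"] assms(3)[of q] h by (simp add: algebra_simps)
    qed
  qed
  have int: "integrable (measure_pmf (pol q)) (\<lambda>y. rstar q y)"
  proof (rule measure_pmf.integrable_const_bound[where B=1])
    show "AE x in measure_pmf (pol q). norm (rstar q x) \<le> 1"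
    proof (rule AE_I2)
      fix x
      have "rstar q x \<in> {0, 1}" by (rule assms(1))
      then show "norm (rstar q x) \<le> 1" by auto
    qed
  qed simp
  have "noisy_mean rstar rp rm pol q = measure_pmf.expectation (pol q) (\<lambda>y. rp q + (1 - rp q - rm q) * rstar q y)"
    unfolding noisy_mean_def i ..
  also have "\<dots> = rp q + (1 - rp q - rm q) * measure_pmf.expectation (pol q) (\<lambda>y. rstar q y)"
    using int by simp
  finally show ?thesis unfolding succ_prob_def .
qed

lemma tv_ge:
  assumes "\<And>q y. rstar q y \<in> {0, 1}"
  shows "\<bar>succ_prob rstar P q - succ_prob rstar Q q\<bar> \<le> tv_dist (P q) (Q q)"
    and "tv_dist (P q) (Q q) \<le> 1"
proof -
  have b: "\<bar>measure_pmf.prob (P q) A - measure_pmf.prob (Q q) A\<bar> \<le> 1" for A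
    using measure_pmf.prob_le_1[of "P q" A] measure_pmf.prob_le_1[of "Q q" A]
      measure_nonneg[of "measure_pmf (P q)" A] measure_nonneg[of "measure_pmf (Q q)" A] unfolding abs_le_iff by linarith
  have bdd: "bdd_above (range (\<lambda>A. \<bar>measure_pmf.prob (P q) A - measure_pmf.prob (Q q) A\<bar>))"
    using b by (auto intro!: bdd_aboveI[where M=1])
  show "\<bar>succ_prob rstar P q - succ_prob rstar Q q\<bar> \<le> tv_dist (P q) (Q q)"
    unfolding succ_prob_eq[OF assms] tv_dist_def by (rule cSUP_upper[OF UNIV_I bdd])
  show "tv_dist (P q) (Q q) \<le> 1" unfolding tv_dist_def by (rule cSUP_least) (simp, rule b)
qed

lemma cs:
  fixes f g :: "'a \<Rightarrow> real"
  assumes [measurable]: "f \<in> borel_measurable M" "g \<in> borel_measurable M"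
    and F: "integrable M (\<lambda>x. (f x)\<^sup>2)" and G: "integrable M (\<lambda>x. (g x)\<^sup>2)"
  shows "integrable M (\<lambda>x. f x * g x)"
    and "(\<integral>x. f x * g x \<partial>M) \<le> sqrt (\<integral>x. (f x)\<^sup>2 \<partial>M) * sqrt (\<integral>x. (g x)\<^sup>2 \<partial>M)"
proof -
  show int: "integrable M (\<lambda>x. f x * g x)"
  proof (rule Bochner_Integration.integrable_bound[OF Bochner_Integration.integrable_add[OF F G]])
    show "AE x in M. norm (f x * g x) \<le> norm ((f x)\<^sup>2 + (g x)\<^sup>2)"
    proof
      fix x
      have "0 \<le> (\<bar>f x\<bar> - \<bar>g x\<bar>)\<^sup>2" by simp
      then have "2 * (\<bar>f x\<bar> * \<bar>g x\<bar>) \<le> (f x)\<^sup>2 + (g x)\<^sup>2"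
        unfolding power2_diff power2_abs by simp
      moreover have "0 \<le> \<bar>f x\<bar> * \<bar>g x\<bar>" by simp
      ultimately have "\<bar>f x * g x\<bar> \<le> (f x)\<^sup>2 + (g x)\<^sup>2"
        unfolding abs_mult by linarith
      then show "norm (f x * g x) \<le> norm ((f x)\<^sup>2 + (g x)\<^sup>2)"
        by simp
    qed
  qed simp
  define A where "A = (\<integral>x. (f x)\<^sup>2 \<partial>M)"
  define B where "B = (\<integral>x. (g x)\<^sup>2 \<partial>M)"
  define C where "C = (\<integral>x. f x * g x \<partial>M)"
  have A0: "A \<ge> 0" unfolding A_def by simp
  have B0: "B \<ge> 0" unfolding B_def by simp
  have key: "2 * C \<le> a * A + B / a" if a: "a > 0" for a
  proof -
    have "(\<integral>x. 2 * (f x * g x) \<partial>M) \<le> (\<integral>x. a * (f x)\<^sup>2 + (g x)\<^sup>2 / a \<partial>M)"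
    proof (rule integral_mono)
      show "integrable M (\<lambda>x. 2 * (f x * g x))" using int by simp
      show "integrable M (\<lambda>x. a * (f x)\<^sup>2 + (g x)\<^sup>2 / a)" using F G by simp
      fix x
      have "0 \<le> (a * f x - g x)\<^sup>2 / a" using a by simp
      also have "(a * f x - g x)\<^sup>2 / a = a * (f x)\<^sup>2 + (g x)\<^sup>2 / a - 2 * (f x * g x)"
        using a by (simp add: field_simps power2_eq_square)
      finally show "2 * (f x * g x) \<le> a * (f x)\<^sup>2 + (g x)\<^sup>2 / a" by simp
    qed
    then show ?thesis unfolding A_def B_def C_def using F G by simp
  qed
  have "C \<le> sqrt A * sqrt B"
  proof (cases "A = 0 \<or> B = 0")
    case True
    show ?thesis
    proof (rule ccontr)
      assume "\<not> ?thesis"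
      with True have Cp: "C > 0" by auto
      show False using True
      proof
        assume "A = 0"
        from key[of "(B + 1) / C"] Cp B0 have "2 * C \<le> B * C / (B + 1)" by (simp add: \<open>A = 0\<close>)
        moreover have "B * C / (B + 1) < C" using Cp B0 by (simp add: field_simps)
        ultimately show False using Cp by simp
      next
        assume "B = 0"
        from key[of "C / (A + 1)"] Cp A0 have "2 * C \<le> C * A / (A + 1)" by (simp add: \<open>B = 0\<close>)
        moreover have "C * A / (A + 1) < C" using Cp A0 by (simp add: field_simps)
        ultimately show False using Cp by simp
      qed
    qed
  next
    case False
    with A0 B0 have Ap: "A > 0" and Bp: "B > 0" by auto
    define a where "a = sqrt B / sqrt A"
    have ap: "a > 0" unfolding a_def using Ap Bp by simp
    have sA: "sqrt A * sqrt A = A" using A0 by simp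
    have sB: "sqrt B * sqrt B = B" using B0 by simp
    have sAp: "sqrt A > 0" "sqrt B > 0" using Ap Bp by auto
    have "a * A = (sqrt B / sqrt A) * (sqrt A * sqrt A)" unfolding a_def by (simp only: sA)
    also have "\<dots> = sqrt A * sqrt B" using sAp by (simp add: field_simps)
    finally have "a * A = sqrt A * sqrt B" .
    moreover have "B / a = (sqrt B * sqrt B) / (sqrt B / sqrt A)" unfolding a_def by (simp only: sB)
    moreover have "\<dots> = sqrt A * sqrt B" using sAp by (simp add: field_simps)
    ultimately show ?thesis using key[OF ap] by simp
  qed
  then show "(\<integral>x. f x * g x \<partial>M) \<le> sqrt (\<integral>x. (f x)\<^sup>2 \<partial>M) * sqrt (\<integral>x. (g x)\<^sup>2 \<partial>M)"
    unfolding A_def B_def C_def .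
qed

theorem theorem3:
  fixes M :: "'q measure"
    and rstar :: "'q \<Rightarrow> 'o::countable \<Rightarrow> real"
    and rp rm :: "'q \<Rightarrow> real"
    and polk pol :: "'q \<Rightarrow> 'o pmf"
  assumes "prob_space M"
    and "\<And>q y. rstar q y \<in> {0, 1}"
    and "\<And>q. rp q \<in> {0..1}" and "\<And>q. rm q \<in> {0..1}"
    and "rp \<in> borel_measurable M" and "rm \<in> borel_measurable M"
    and "succ_prob rstar pol \<in> borel_measurable M"
    and "succ_prob rstar polk \<in> borel_measurable M"
    and "(\<lambda>q. tv_dist (pol q) (polk q)) \<in> borel_measurable M"
    and "AE q in M. 0 < mu_k rstar rp rm polk q \<and> mu_k rstar rp rm polk q < 1"
    and "integrable M (\<lambda>q. ((1 - rp q - rm q - sigma_k rstar rp rm polk q)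
                              / sigma_k rstar rp rm polk q)\<^sup>2)"
  shows "(\<integral>q. succ_prob rstar pol q - succ_prob rstar polk q \<partial>M)
         \<ge> (\<integral>q. noisy_surrogate rstar rp rm polk pol q \<partial>M)
           - 2 * sqrt (\<integral>q. ((1 - rp q - rm q - sigma_k rstar rp rm polk q)
                              / sigma_k rstar rp rm polk q)\<^sup>2 \<partial>M)
               * sqrt (\<integral>q. (tv_dist (pol q) (polk q))\<^sup>2 \<partial>M)"
proof -
  interpret P: prob_space M by fact
  note [measurable] = assms(5-9)
  define c where "c = (\<lambda>q. 1 - rp q - rm q)"
  define s where "s = sigma_k rstar rp rm polk"
  define g where "g = (\<lambda>q. (c q - s q) / s q)"
  define d where "d = (\<lambda>q. succ_prob rstar pol q - succ_prob rstar polk q)"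
  define t where "t = (\<lambda>q. tv_dist (pol q) (polk q))"
  have [measurable]: "s \<in> borel_measurable M"
    unfolding s_def sigma_k_def[abs_def] mu_k_def by measurable
  have [measurable]: "c \<in> borel_measurable M" "g \<in> borel_measurable M"
    "d \<in> borel_measurable M" "t \<in> borel_measurable M"
    unfolding c_def g_def d_def t_def by measurable
  have dt: "\<bar>d q\<bar> \<le> t q" for q unfolding d_def t_def by (rule tv_ge(1)[OF assms(2)])
  have t1: "t q \<le> 1" for q unfolding t_def by (rule tv_ge(2)[OF assms(2)])
  have t0: "0 \<le> t q" for q using dt[of q] by simp
  have Lq: "noisy_surrogate rstar rp rm polk pol q = c q * d q / s q" for q
    unfolding noisy_surrogate_def noisy_mean_eq[OF assms(2-4)] c_def d_def s_def
    by (simp add: algebra_simps)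
  have G: "integrable M (\<lambda>q. (g q)\<^sup>2)" using assms(11) unfolding g_def c_def s_def .
  have T: "integrable M (\<lambda>q. (t q)\<^sup>2)"
    by (rule P.integrable_const_bound[where B=1]) (use t0 t1 in \<open>auto simp: abs_square_le_1\<close>)
  have D: "integrable M d"
    by (rule P.integrable_const_bound[where B=1]) (use dt t1 in \<open>auto intro: order_trans\<close>)
  have cs1: "integrable M (\<lambda>q. t q * \<bar>g q\<bar>)"
    and cs2: "(\<integral>q. t q * \<bar>g q\<bar> \<partial>M) \<le> sqrt (\<integral>q. (t q)\<^sup>2 \<partial>M) * sqrt (\<integral>q. \<bar>g q\<bar>\<^sup>2 \<partial>M)"
    using cs[of t M "\<lambda>q. \<bar>g q\<bar>"] T G by auto
  have C2: "integrable M (\<lambda>q. 2::real)" by simp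
  have L: "integrable M (\<lambda>q. c q * d q / s q)"
  proof (rule Bochner_Integration.integrable_bound[OF Bochner_Integration.integrable_add[OF G C2]])
    show "AE x in M. norm (c x * d x / s x) \<le> norm ((g x)\<^sup>2 + 2)"
    proof
      fix x
      have dd: "\<bar>d x\<bar> \<le> 1" using dt[of x] t1[of x] by simp
      have "\<bar>c x * d x / s x\<bar> \<le> \<bar>c x / s x\<bar>"
      proof -
        have "\<bar>c x * d x / s x\<bar> = \<bar>c x / s x\<bar> * \<bar>d x\<bar>" by (simp add: abs_mult)
        also have "\<dots> \<le> \<bar>c x / s x\<bar>" using dd by (rule mult_left_le) simp
        finally show ?thesis .
      qed
      also have "\<bar>c x / s x\<bar> \<le> \<bar>g x\<bar> + 1"
      proof (cases "s x = 0")
        case False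
        then have "c x / s x = g x + 1" unfolding g_def by (simp add: field_simps)
        then show ?thesis by simp
      qed simp
      also have "\<bar>g x\<bar> + 1 \<le> (g x)\<^sup>2 + 2"
      proof -
        have "0 \<le> (\<bar>g x\<bar> - 1)\<^sup>2" by simp
        then show ?thesis by (simp add: power2_eq_square algebra_simps)
      qed
      finally show "norm (c x * d x / s x) \<le> norm ((g x)\<^sup>2 + 2)" by simp
    qed
  qed simp
  have "(\<integral>q. d q \<partial>M) - (\<integral>q. c q * d q / s q \<partial>M) = (\<integral>q. d q - c q * d q / s q \<partial>M)"
    using D L by simp
  also have "\<dots> \<ge> (\<integral>q. - (t q * \<bar>g q\<bar>) \<partial>M)"
  proof (rule integral_mono_AE)
    show "integrable M (\<lambda>q. - (t q * \<bar>g q\<bar>))" using cs1 by simp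
    show "integrable M (\<lambda>q. d q - c q * d q / s q)" using D L by simp
    show "AE q in M. - (t q * \<bar>g q\<bar>) \<le> d q - c q * d q / s q"
      using assms(10)
    proof eventually_elim
      case (elim q)
      have "s q > 0" using elim unfolding s_def sigma_k_def by simp
      then have "d q - c q * d q / s q = - (d q * g q)" unfolding g_def by (simp add: field_simps)
      moreover have "\<bar>d q * g q\<bar> \<le> t q * \<bar>g q\<bar>" using dt[of q] by (simp add: abs_mult mult_right_mono)
      ultimately show ?case by simp
    qed
  qed
  finally have main: "(\<integral>q. d q \<partial>M) \<ge> (\<integral>q. c q * d q / s q \<partial>M) - (\<integral>q. t q * \<bar>g q\<bar> \<partial>M)"
    by simp
  define X where "X = sqrt (\<integral>q. (t q)\<^sup>2 \<partial>M)"
  define Y where "Y = sqrt (\<integral>q. (g q)\<^sup>2 \<partial>M)"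
  have cs2': "(\<integral>q. t q * \<bar>g q\<bar> \<partial>M) \<le> X * Y" using cs2 unfolding X_def Y_def by simp
  have nn: "0 \<le> X * Y" unfolding X_def Y_def by simp
  have "2 * Y * X = 2 * (X * Y)" by (simp add: mult_ac)
  then have "(\<integral>q. t q * \<bar>g q\<bar> \<partial>M) \<le> 2 * sqrt (\<integral>q. (g q)\<^sup>2 \<partial>M) * sqrt (\<integral>q. (t q)\<^sup>2 \<partial>M)"
    unfolding X_def[symmetric] Y_def[symmetric] using cs2' nn by linarith
  with main have "(\<integral>q. d q \<partial>M) \<ge> (\<integral>q. c q * d q / s q \<partial>M) - 2 * sqrt (\<integral>q. (g q)\<^sup>2 \<partial>M) * sqrt (\<integral>q. (t q)\<^sup>2 \<partial>M)"
    by linarith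
  then show ?thesis unfolding Lq d_def g_def t_def c_def s_def .
qed

end
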